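(* Let $X,Y$ be continuous processes. Then $\int_0^\cdot X\,d^\circ Y$ exists if and only if the Lévy area $L(X,Y)$ exists, and in that case $2\int_0^tX\,d^\circ Y=X_tY_t-X_0Y_0+L(X,Y)_t$.
   Context: $T>0$; continuous functions are extended by $f(t)=f(0)$ for $t\le0$, $f(t)=f(T)$ for $t>T$. Limits are in the ucp sense: uniformly in $t\in[0,T]$, in probability, as $\varepsilon\to0^+$. The symmetric integral $\int_0^tX\,d^\circ Y$ is the ucp limit of $\int_0^tX(s)\frac{Y(s+\varepsilon)-Y(s-\varepsilon)}{2\varepsilon}ds$, and the Lévy area is $L(X,Y)_t=\lim_{\varepsilon\to0^+}\int_0^t\frac{X_sY_{s+\varepsilon}-X_{s+\varepsilon}Y_s}{\varepsilon}ds$ (ucp limit). *)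

theory Defs
  imports "HOL-Probability.Probability"
begin

definition ext :: "real \<Rightarrow> (real \<Rightarrow> 'a \<Rightarrow> real) \<Rightarrow> real \<Rightarrow> 'a \<Rightarrow> real" where
  "ext T X t \<omega> = X (max 0 (min T t)) \<omega>"

text \<open>ucp convergence as eps tends to 0 from the right: uniformly in t in [0,T], in (outer)
  probability.\<close>
definition ucp_conv :: "'a measure \<Rightarrow> real \<Rightarrow> (real \<Rightarrow> real \<Rightarrow> 'a \<Rightarrow> real)
    \<Rightarrow> (real \<Rightarrow> 'a \<Rightarrow> real) \<Rightarrow> bool" where
  "ucp_conv M T Z Z0 \<longleftrightarrow>
     (\<forall>\<delta>>0. \<forall>\<eta>>0. \<exists>e0>0. \<forall>\<epsilon>. 0 < \<epsilon> \<and> \<epsilon> < e0 \<longrightarrow>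
        (\<exists>A\<in>sets M. measure M A < \<eta> \<and>
           {\<omega>\<in>space M. \<exists>t\<in>{0..T}. \<bar>Z \<epsilon> t \<omega> - Z0 t \<omega>\<bar> > \<delta>} \<subseteq> A))"

definition sym_approx :: "real \<Rightarrow> (real \<Rightarrow> 'a \<Rightarrow> real) \<Rightarrow> (real \<Rightarrow> 'a \<Rightarrow> real)
    \<Rightarrow> real \<Rightarrow> real \<Rightarrow> 'a \<Rightarrow> real" where
  "sym_approx T X Y \<epsilon> t \<omega> = integral {0..t}
     (\<lambda>s. ext T X s \<omega> * (ext T Y (s + \<epsilon>) \<omega> - ext T Y (s - \<epsilon>) \<omega>) / (2 * \<epsilon>))"

definition levy_approx :: "real \<Rightarrow> (real \<Rightarrow> 'a \<Rightarrow> real) \<Rightarrow> (real \<Rightarrow> 'a \<Rightarrow> real)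
    \<Rightarrow> real \<Rightarrow> real \<Rightarrow> 'a \<Rightarrow> real" where
  "levy_approx T X Y \<epsilon> t \<omega> = integral {0..t}
     (\<lambda>s. (ext T X s \<omega> * ext T Y (s + \<epsilon>) \<omega> - ext T X (s + \<epsilon>) \<omega> * ext T Y s \<omega>) / \<epsilon>)"

definition is_sym_integral where
  "is_sym_integral M T X Y I \<longleftrightarrow> ucp_conv M T (sym_approx T X Y) I"

definition is_levy_area where
  "is_levy_area M T X Y L \<longleftrightarrow> ucp_conv M T (levy_approx T X Y) L"

definition continuous_process :: "'a measure \<Rightarrow> real \<Rightarrow> (real \<Rightarrow> 'a \<Rightarrow> real) \<Rightarrow> bool" where
  "continuous_process M T X \<longleftrightarrow>
     (\<forall>t\<in>{0..T}. X t \<in> borel_measurable M) \<and>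
     (\<forall>\<omega>\<in>space M. continuous_on {0..T} (\<lambda>t. X t \<omega>))"

end

theory Submission
  imports Defs
begin


lemma det:
  fixes x y :: "real \<Rightarrow> real"
  assumes cx: "continuous_on UNIV x" and cy: "continuous_on UNIV y" and e: "\<epsilon> > 0"
    and t: "t \<ge> 0"
    and bnd: "\<And>s u r. \<bar>s - r\<bar> \<le> \<epsilon> \<Longrightarrow> \<bar>u - r\<bar> \<le> \<epsilon> \<Longrightarrow> \<bar>x s * y u - x r * y r\<bar> \<le> c"
  shows "\<bar>2 * integral {0..t} (\<lambda>s. x s * (y (s + \<epsilon>) - y (s - \<epsilon>)) / (2 * \<epsilon>))
           - integral {0..t} (\<lambda>s. (x s * y (s + \<epsilon>) - x (s + \<epsilon>) * y s) / \<epsilon>)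
           - (x t * y t - x 0 * y 0)\<bar> \<le> 2 * c"
proof -
  have c0: "c \<ge> 0" using bnd[of 0 0 0] e by auto
  define g where "g s = x s * y (s - \<epsilon>)" for s
  have cg: "continuous_on UNIV g" unfolding g_def
    by (intro continuous_intros continuous_on_compose2[OF cy] cx) auto
  have cont: "continuous_on A f" if "continuous_on UNIV f" for A and f :: "real \<Rightarrow> real"
    using that continuous_on_subset by blast
  have intg: "\<And>a b. f integrable_on {a..b}" if "continuous_on UNIV f" for f :: "real \<Rightarrow> real"
    by (rule integrable_continuous_real[OF cont[OF that]])
  have cgs: "continuous_on UNIV (\<lambda>s. g (s + \<epsilon>))"
    by (intro continuous_on_compose2[OF cg] continuous_intros) auto
  have c1: "continuous_on UNIV (\<lambda>s. x s * (y (s + \<epsilon>) - y (s - \<epsilon>)) / (2 * \<epsilon>))"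
    using e by (intro continuous_intros continuous_on_compose2[OF cy] cx) auto
  have c2: "continuous_on UNIV (\<lambda>s. (x s * y (s + \<epsilon>) - x (s + \<epsilon>) * y s) / \<epsilon>)"
    using e by (intro continuous_intros continuous_on_compose2[OF cy] continuous_on_compose2[OF cx] cx cy) auto
  have "2 * integral {0..t} (\<lambda>s. x s * (y (s + \<epsilon>) - y (s - \<epsilon>)) / (2 * \<epsilon>))
           - integral {0..t} (\<lambda>s. (x s * y (s + \<epsilon>) - x (s + \<epsilon>) * y s) / \<epsilon>)
       = integral {0..t} (\<lambda>s. 2 * (x s * (y (s + \<epsilon>) - y (s - \<epsilon>)) / (2 * \<epsilon>))
           - (x s * y (s + \<epsilon>) - x (s + \<epsilon>) * y s) / \<epsilon>)"
  proof -
    let ?f1 = "\<lambda>s. x s * (y (s + \<epsilon>) - y (s - \<epsilon>)) / (2 * \<epsilon>)"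
    let ?f2 = "\<lambda>s. (x s * y (s + \<epsilon>) - x (s + \<epsilon>) * y s) / \<epsilon>"
    have i1: "(\<lambda>s. 2 * ?f1 s) integrable_on {0..t}"
      using intg[OF c1] by (rule integrable_on_mult_right)
    have "integral {0..t} (\<lambda>s. 2 * ?f1 s - ?f2 s) = integral {0..t} (\<lambda>s. 2 * ?f1 s) - integral {0..t} ?f2"
      by (rule integral_diff[OF i1 intg[OF c2]])
    also have "integral {0..t} (\<lambda>s. 2 * ?f1 s) = 2 * integral {0..t} ?f1"
      by (rule integral_mult_right)
    finally show ?thesis by simp
  qed
  also have "\<dots> = integral {0..t} (\<lambda>s. (g (s + \<epsilon>) - g s) / \<epsilon>)"
    by (rule integral_cong) (use e in \<open>auto simp: g_def field_simps\<close>)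
  also have "\<dots> = (integral {0..t} (\<lambda>s. g (s + \<epsilon>)) - integral {0..t} g) / \<epsilon>"
    using intg[OF cg] intg[OF cgs] by (simp add: integral_diff integral_divide)
  also have "integral {0..t} (\<lambda>s. g (s + \<epsilon>)) = integral {\<epsilon>..t+\<epsilon>} g"
    using integral_shift_real_ivl[where f=g and a=\<epsilon> and b="t+\<epsilon>" and c=\<epsilon>] by simp
  also have "integral {\<epsilon>..t+\<epsilon>} g - integral {0..t} g = integral {t..t+\<epsilon>} g - integral {0..\<epsilon>} g"
  proof (cases "t \<le> \<epsilon>")
    case True
    have "integral {t..\<epsilon>} g + integral {\<epsilon>..t+\<epsilon>} g = integral {t..t+\<epsilon>} g"
      by (rule Henstock_Kurzweil_Integration.integral_combine) (use True e t intg[OF cg] in auto)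
    moreover have "integral {0..t} g + integral {t..\<epsilon>} g = integral {0..\<epsilon>} g"
      by (rule Henstock_Kurzweil_Integration.integral_combine) (use True t t intg[OF cg] in auto)
    ultimately show ?thesis by linarith
  next
    case False
    have "integral {\<epsilon>..t} g + integral {t..t+\<epsilon>} g = integral {\<epsilon>..t+\<epsilon>} g"
      by (rule Henstock_Kurzweil_Integration.integral_combine) (use False e t intg[OF cg] in auto)
    moreover have "integral {0..\<epsilon>} g + integral {\<epsilon>..t} g = integral {0..t} g"
      by (rule Henstock_Kurzweil_Integration.integral_combine) (use False e t intg[OF cg] in auto)
    ultimately show ?thesis by linarith
  qed
  finally have eq: "2 * integral {0..t} (\<lambda>s. x s * (y (s + \<epsilon>) - y (s - \<epsilon>)) / (2 * \<epsilon>))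
           - integral {0..t} (\<lambda>s. (x s * y (s + \<epsilon>) - x (s + \<epsilon>) * y s) / \<epsilon>)
       = (integral {t..t+\<epsilon>} g - integral {0..\<epsilon>} g) / \<epsilon>" .
  have b1: "\<bar>integral {t..t+\<epsilon>} g - \<epsilon> * (x t * y t)\<bar> \<le> c * \<epsilon>"
  proof -
    have "((\<lambda>s. g s - x t * y t) has_integral (integral {t..t+\<epsilon>} g - \<epsilon> * (x t * y t))) {t..t+\<epsilon>}"
      using has_integral_diff[OF integrable_integral[OF intg[OF cg]] has_integral_const_real[of "x t * y t" t "t+\<epsilon>"]] e
      by simp
    moreover have "\<And>s. s \<in> {t..t+\<epsilon>} - {} \<Longrightarrow> norm (g s - x t * y t) \<le> c"
      unfolding g_def using t by (auto intro!: bnd)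
    ultimately have "norm (integral {t..t+\<epsilon>} g - \<epsilon> * (x t * y t)) \<le> c * Henstock_Kurzweil_Integration.content {t..t+\<epsilon>}"
      by (rule has_integral_bound_real[OF c0 finite.emptyI])
    then show ?thesis using e by simp
  qed
  have b2: "\<bar>integral {0..\<epsilon>} g - \<epsilon> * (x 0 * y 0)\<bar> \<le> c * \<epsilon>"
  proof -
    have "((\<lambda>s. g s - x 0 * y 0) has_integral (integral {0..\<epsilon>} g - \<epsilon> * (x 0 * y 0))) {0..\<epsilon>}"
      using has_integral_diff[OF integrable_integral[OF intg[OF cg]] has_integral_const_real[of "x 0 * y 0" 0 "\<epsilon>"]] e
      by simp
    moreover have "\<And>s. s \<in> {0..\<epsilon>} - {} \<Longrightarrow> norm (g s - x 0 * y 0) \<le> c"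
      unfolding g_def using t by (auto intro!: bnd)
    ultimately have "norm (integral {0..\<epsilon>} g - \<epsilon> * (x 0 * y 0)) \<le> c * Henstock_Kurzweil_Integration.content {0..\<epsilon>}"
      by (rule has_integral_bound_real[OF c0 finite.emptyI])
    then show ?thesis using e by simp
  qed
  have "\<bar>(integral {t..t+\<epsilon>} g - integral {0..\<epsilon>} g) / \<epsilon> - (x t * y t - x 0 * y 0)\<bar>
     = \<bar>(integral {t..t+\<epsilon>} g - \<epsilon> * (x t * y t)) - (integral {0..\<epsilon>} g - \<epsilon> * (x 0 * y 0))\<bar> / \<epsilon>"
    using e by (simp add: field_simps)
  also have "\<dots> \<le> (c * \<epsilon> + c * \<epsilon>) / \<epsilon>"
    using b1 b2 e by (intro divide_right_mono) (auto simp: abs_le_iff algebra_simps)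
  also have "\<dots> = 2 * c" using e by (simp add: field_simps)
  finally show ?thesis using eq by simp
qed



lemma ucp_lin:
  assumes "ucp_conv M T Z1 A" "ucp_conv M T Z2 B"
  shows "ucp_conv M T (\<lambda>e t \<omega>. a * Z1 e t \<omega> + b * Z2 e t \<omega>) (\<lambda>t \<omega>. a * A t \<omega> + b * B t \<omega>)"
  unfolding ucp_conv_def
proof (intro allI impI)
  fix \<delta> \<eta> :: real assume d: "\<delta> > 0" and h: "\<eta> > 0"
  define da where "da = \<delta> / (2 * (\<bar>a\<bar> + 1))"
  define db where "db = \<delta> / (2 * (\<bar>b\<bar> + 1))"
  have da: "da > 0" "\<bar>a\<bar> * da \<le> \<delta> / 2" using d unfolding da_def by (auto simp: field_simps)
  have db: "db > 0" "\<bar>b\<bar> * db \<le> \<delta> / 2" using d unfolding db_def by (auto simp: field_simps)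
  obtain e1 where e1: "e1 > 0" and H1: "\<And>\<epsilon>. 0 < \<epsilon> \<and> \<epsilon> < e1 \<Longrightarrow>
        (\<exists>A'\<in>sets M. measure M A' < \<eta>/2 \<and>
           {\<omega>\<in>space M. \<exists>t\<in>{0..T}. \<bar>Z1 \<epsilon> t \<omega> - A t \<omega>\<bar> > da} \<subseteq> A')"
    using assms(1)[unfolded ucp_conv_def, rule_format, OF da(1), of "\<eta>/2"] h by auto
  obtain e2 where e2: "e2 > 0" and H2: "\<And>\<epsilon>. 0 < \<epsilon> \<and> \<epsilon> < e2 \<Longrightarrow>
        (\<exists>A'\<in>sets M. measure M A' < \<eta>/2 \<and>
           {\<omega>\<in>space M. \<exists>t\<in>{0..T}. \<bar>Z2 \<epsilon> t \<omega> - B t \<omega>\<bar> > db} \<subseteq> A')"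
    using assms(2)[unfolded ucp_conv_def, rule_format, OF db(1), of "\<eta>/2"] h by auto
  show "\<exists>e0>0. \<forall>\<epsilon>. 0 < \<epsilon> \<and> \<epsilon> < e0 \<longrightarrow>
          (\<exists>A'\<in>sets M. measure M A' < \<eta> \<and>
             {\<omega> \<in> space M. \<exists>t\<in>{0..T}. \<delta> < \<bar>a * Z1 \<epsilon> t \<omega> + b * Z2 \<epsilon> t \<omega> - (a * A t \<omega> + b * B t \<omega>)\<bar>} \<subseteq> A')"
  proof (intro exI[of _ "min e1 e2"] conjI allI impI)
    show "min e1 e2 > 0" using e1 e2 by auto
    fix \<epsilon> assume ee: "0 < \<epsilon> \<and> \<epsilon> < min e1 e2"
    obtain A1 A2 where A1: "A1 \<in> sets M" "measure M A1 < \<eta>/2"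
        "{\<omega>\<in>space M. \<exists>t\<in>{0..T}. \<bar>Z1 \<epsilon> t \<omega> - A t \<omega>\<bar> > da} \<subseteq> A1"
      and A2: "A2 \<in> sets M" "measure M A2 < \<eta>/2"
        "{\<omega>\<in>space M. \<exists>t\<in>{0..T}. \<bar>Z2 \<epsilon> t \<omega> - B t \<omega>\<bar> > db} \<subseteq> A2"
      using H1[of \<epsilon>] H2[of \<epsilon>] ee by auto
    show "\<exists>A'\<in>sets M. measure M A' < \<eta> \<and>
             {\<omega> \<in> space M. \<exists>t\<in>{0..T}. \<delta> < \<bar>a * Z1 \<epsilon> t \<omega> + b * Z2 \<epsilon> t \<omega> - (a * A t \<omega> + b * B t \<omega>)\<bar>} \<subseteq> A'"
    proof (intro bexI[of _ "A1 \<union> A2"] conjI)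
      show "A1 \<union> A2 \<in> sets M" using A1 A2 by auto
      show "measure M (A1 \<union> A2) < \<eta>"
        using measure_Un_le[OF A1(1) A2(1)] A1(2) A2(2) by linarith
      show "{\<omega> \<in> space M. \<exists>t\<in>{0..T}. \<delta> < \<bar>a * Z1 \<epsilon> t \<omega> + b * Z2 \<epsilon> t \<omega> - (a * A t \<omega> + b * B t \<omega>)\<bar>} \<subseteq> A1 \<union> A2"
      proof safe
        fix \<omega> t assume om: "\<omega> \<in> space M" and t: "t \<in> {0..T}"
          and big: "\<delta> < \<bar>a * Z1 \<epsilon> t \<omega> + b * Z2 \<epsilon> t \<omega> - (a * A t \<omega> + b * B t \<omega>)\<bar>"
          and n2: "\<omega> \<notin> A2"
        show "\<omega> \<in> A1"
        proof (rule ccontr)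
          assume n1: "\<omega> \<notin> A1"
          have u: "\<bar>Z1 \<epsilon> t \<omega> - A t \<omega>\<bar> \<le> da" using A1(3) n1 om t by force
          have v: "\<bar>Z2 \<epsilon> t \<omega> - B t \<omega>\<bar> \<le> db" using A2(3) n2 om t by force
          have "\<bar>a * Z1 \<epsilon> t \<omega> + b * Z2 \<epsilon> t \<omega> - (a * A t \<omega> + b * B t \<omega>)\<bar>
              = \<bar>a * (Z1 \<epsilon> t \<omega> - A t \<omega>) + b * (Z2 \<epsilon> t \<omega> - B t \<omega>)\<bar>"
            by (simp add: algebra_simps)
          also have "\<dots> \<le> \<bar>a\<bar> * \<bar>Z1 \<epsilon> t \<omega> - A t \<omega>\<bar> + \<bar>b\<bar> * \<bar>Z2 \<epsilon> t \<omega> - B t \<omega>\<bar>"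
            by (metis abs_mult abs_triangle_ineq)
          also have "\<dots> \<le> \<bar>a\<bar> * da + \<bar>b\<bar> * db"
            by (intro add_mono mult_left_mono u v) auto
          also have "\<dots> \<le> \<delta>" using da db by linarith
          finally show False using big by linarith
        qed
      qed
    qed
  qed
qed

lemma ucp_zero_AE:
  assumes P: "prob_space M" and H: "ucp_conv M T (\<lambda>e t \<omega>. 0) Z0"
  shows "AE \<omega> in M. \<forall>t\<in>{0..T}. Z0 t \<omega> = 0"
proof -
  interpret prob_space M by (rule P)
  define Bad where "Bad k = {\<omega>\<in>space M. \<exists>t\<in>{0..T}. \<bar>0 - Z0 t \<omega>\<bar> > inverse (real (Suc k))}" for k
  have ex: "\<exists>A. A \<in> sets M \<and> measure M A < inverse (real (Suc j)) \<and> Bad k \<subseteq> A" for k j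
  proof -
    have p1: "inverse (real (Suc k)) > 0" and p2: "inverse (real (Suc j)) > 0" by auto
    obtain e0 :: real where e0: "e0 > 0" and E: "\<And>\<epsilon>. 0 < \<epsilon> \<and> \<epsilon> < e0 \<Longrightarrow>
        (\<exists>A\<in>sets M. measure M A < inverse (real (Suc j)) \<and> Bad k \<subseteq> A)"
      using H[unfolded ucp_conv_def, rule_format, OF p1 p2] unfolding Bad_def by blast
    have "0 < e0/2 \<and> e0/2 < e0" using e0 by simp
    from E[OF this] show ?thesis by blast
  qed
  define Af where "Af k j = (SOME A. A \<in> sets M \<and> measure M A < inverse (real (Suc j)) \<and> Bad k \<subseteq> A)" for k j
  have AF: "Af k j \<in> sets M \<and> measure M (Af k j) < inverse (real (Suc j)) \<and> Bad k \<subseteq> Af k j" for k j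
    unfolding Af_def by (rule someI_ex) (rule ex)
  have Af: "\<And>k j. Af k j \<in> sets M" "\<And>k j. measure M (Af k j) < inverse (real (Suc j))"
    "\<And>k j. {\<omega>\<in>space M. \<exists>t\<in>{0..T}. \<bar>0 - Z0 t \<omega>\<bar> > inverse (real (Suc k))} \<subseteq> Af k j"
    using AF unfolding Bad_def by blast+
  define N where "N = (\<Union>k. \<Inter>j. Af k j)"
  have nk: "(\<Inter>j. Af k j) \<in> null_sets M" for k
  proof -
    have s: "(\<Inter>j. Af k j) \<in> sets M" using Af(1) by auto
    have "measure M (\<Inter>j. Af k j) \<le> inverse (real (Suc j))" for j
    proof -
      have sub: "(\<Inter>j. Af k j) \<subseteq> Af k j" by auto
      show ?thesis using finite_measure_mono[OF sub Af(1)[of k j]] Af(2)[of k j] by linarith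
    qed
    then have "measure M (\<Inter>j. Af k j) \<le> 0"
      by (intro tendsto_lowerbound[OF LIMSEQ_inverse_real_of_nat]) auto
    then have "measure M (\<Inter>j. Af k j) = 0" using measure_nonneg by (metis order.antisym)
    then show ?thesis using s by (simp add: emeasure_eq_measure null_sets_def)
  qed
  have "N \<in> null_sets M" unfolding N_def using nk by (intro null_sets_UN) auto
  moreover have "{\<omega>\<in>space M. \<not> (\<forall>t\<in>{0..T}. Z0 t \<omega> = 0)} \<subseteq> N"
  proof (rule subsetI)
    fix \<omega> assume "\<omega> \<in> {\<omega>\<in>space M. \<not> (\<forall>t\<in>{0..T}. Z0 t \<omega> = 0)}"
    then obtain t where om: "\<omega> \<in> space M" and t: "t \<in> {0..T}" and nz: "Z0 t \<omega> \<noteq> 0" by blast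
    then obtain k where "inverse (real (Suc k)) < \<bar>Z0 t \<omega>\<bar>"
      using reals_Archimedean[of "\<bar>Z0 t \<omega>\<bar>"] by auto
    then have "\<omega> \<in> Af k j" for j using Af(3)[of k j] om t by force
    then show "\<omega> \<in> N" unfolding N_def by auto
  qed
  ultimately show ?thesis by (rule AE_I')
qed



lemma ext_in: "t \<in> {0..T} \<Longrightarrow> ext T X t \<omega> = X t \<omega>"
  by (simp add: ext_def)

lemma clamp_in: "0 \<le> (T::real) \<Longrightarrow> max 0 (min T t) \<in> {0..T}" by (auto simp: max_def min_def)

lemma clamp_lip: "\<bar>max 0 (min T s) - max 0 (min T (r::real))\<bar> \<le> \<bar>s - r\<bar>"
  by (simp add: max_def min_def abs_if)

lemma ext_cont:
  assumes "0 \<le> T" "continuous_on {0..T} (\<lambda>t. X t \<omega>)"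
  shows "continuous_on UNIV (\<lambda>t. ext T X t \<omega>)"
  unfolding ext_def
  by (rule continuous_on_compose2[OF assms(2), of UNIV "\<lambda>t. max 0 (min T t)"])
     (use assms(1) in \<open>auto intro!: continuous_intros\<close>)

lemma ext_meas:
  assumes "0 \<le> T" "\<forall>t\<in>{0..T}. X t \<in> borel_measurable M"
  shows "(\<lambda>\<omega>. ext T X t \<omega>) \<in> borel_measurable M"
proof -
  have "X (max 0 (min T t)) \<in> borel_measurable M" using assms clamp_in by blast
  then show ?thesis unfolding ext_def by simp
qed

lemma ext_uc:
  assumes "0 \<le> T" "continuous_on {0..T} (\<lambda>t. X t \<omega>)" "e > 0"
  shows "\<exists>d>0. \<forall>s r. \<bar>s - r\<bar> < d \<longrightarrow> \<bar>ext T X s \<omega> - ext T X r \<omega>\<bar> < e"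
proof -
  have "uniformly_continuous_on {0..T} (\<lambda>t. X t \<omega>)"
    using compact_uniformly_continuous[OF assms(2)] by simp
  then obtain d where d: "d > 0" and H: "\<forall>x\<in>{0..T}. \<forall>x'\<in>{0..T}. dist x' x < d \<longrightarrow> dist (X x' \<omega>) (X x \<omega>) < e"
    using assms(3) unfolding uniformly_continuous_on_def by metis
  show ?thesis
  proof (intro exI[of _ d] conjI allI impI)
    fix s r :: real assume "\<bar>s - r\<bar> < d"
    then have "dist (max 0 (min T s)) (max 0 (min T r)) < d"
      using clamp_lip[of T s r] by (simp add: dist_real_def)
    then show "\<bar>ext T X s \<omega> - ext T X r \<omega>\<bar> < e"
      using H clamp_in[OF assms(1)] unfolding ext_def dist_real_def by blast
  qed (use d in auto)
qed

lemma ext_bnd: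
  assumes "0 \<le> T" "continuous_on {0..T} (\<lambda>t. X t \<omega>)"
  shows "\<exists>K\<ge>0. \<forall>s. \<bar>ext T X s \<omega>\<bar> \<le> K"
proof -
  have "compact ((\<lambda>t. X t \<omega>) ` {0..T})"
    by (rule compact_continuous_image[OF assms(2)]) simp
  then have "bounded ((\<lambda>t. X t \<omega>) ` {0..T})" by (rule compact_imp_bounded)
  then obtain K where K: "\<forall>x\<in>(\<lambda>t. X t \<omega>) ` {0..T}. norm x \<le> K"
    unfolding bounded_iff by blast
  have "\<forall>s. \<bar>ext T X s \<omega>\<bar> \<le> K" using K clamp_in[OF assms(1)] unfolding ext_def by auto
  moreover have "K \<ge> 0" using K assms(1) by force
  ultimately show ?thesis by blast
qed

lemma rat_approx:
  fixes h :: "real \<Rightarrow> real"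
  assumes "continuous_on UNIV h" "c < h a" "\<rho> > 0"
  shows "\<exists>q\<in>\<rat>. \<bar>q - a\<bar> < \<rho> \<and> c < h q"
proof -
  obtain d where d: "d > 0" and H: "\<forall>x'. dist x' a < d \<longrightarrow> dist (h x') (h a) < h a - c"
    using assms(1,2) unfolding continuous_on_iff by (metis UNIV_I diff_gt_0_iff_gt)
  obtain q where q: "q \<in> \<rat>" "a < q" "q < a + min d \<rho>"
    using Rats_dense_in_real[of a "a + min d \<rho>"] d assms(3) by auto
  have "dist q a < d" using q by (simp add: dist_real_def)
  then have "\<bar>h q - h a\<bar> < h a - c" using H by (simp add: dist_real_def)
  then show ?thesis using q by (intro bexI[of _ q]) auto
qed



lemma D_conv:
  assumes P: "prob_space M" and T: "T > 0"
    and cX: "continuous_process M T X" and cY: "continuous_process M T Y"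
  shows "ucp_conv M T (\<lambda>e t \<omega>. 2 * sym_approx T X Y e t \<omega> - levy_approx T X Y e t \<omega>)
            (\<lambda>t \<omega>. X t \<omega> * Y t \<omega> - X 0 \<omega> * Y 0 \<omega>)"
  unfolding ucp_conv_def
proof (intro allI impI)
  interpret prob_space M by (rule P)
  fix \<delta> \<eta> :: real assume d: "\<delta> > 0" and h: "\<eta> > 0"
  have T0: "0 \<le> T" using T by simp
  define x where "x \<omega> s = ext T X s \<omega>" for \<omega> s
  define y where "y \<omega> s = ext T Y s \<omega>" for \<omega> s
  have mX: "\<forall>t\<in>{0..T}. X t \<in> borel_measurable M" and cXo: "\<And>\<omega>. \<omega> \<in> space M \<Longrightarrow> continuous_on {0..T} (\<lambda>t. X t \<omega>)"
    using cX unfolding continuous_process_def by auto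
  have mY: "\<forall>t\<in>{0..T}. Y t \<in> borel_measurable M" and cYo: "\<And>\<omega>. \<omega> \<in> space M \<Longrightarrow> continuous_on {0..T} (\<lambda>t. Y t \<omega>)"
    using cY unfolding continuous_process_def by auto
  have cx: "continuous_on UNIV (x \<omega>)" if "\<omega> \<in> space M" for \<omega>
    unfolding x_def using ext_cont[of T X \<omega>, OF T0 cXo[OF that]] by simp
  have cy: "continuous_on UNIV (y \<omega>)" if "\<omega> \<in> space M" for \<omega>
    unfolding y_def using ext_cont[of T Y \<omega>, OF T0 cYo[OF that]] by simp
  have mx: "(\<lambda>\<omega>. x \<omega> s) \<in> borel_measurable M" for s
    unfolding x_def by (rule ext_meas[OF T0 mX])
  have my: "(\<lambda>\<omega>. y \<omega> s) \<in> borel_measurable M" for s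
    unfolding y_def by (rule ext_meas[OF T0 mY])
  define B where "B e = {\<omega>\<in>space M. \<exists>q1\<in>\<rat>. \<exists>q2\<in>\<rat>. \<exists>q3\<in>\<rat>.
      \<bar>q1 - q3\<bar> < 2 * e \<and> \<bar>q2 - q3\<bar> < 2 * e \<and> \<delta> / 2 < \<bar>x \<omega> q1 * y \<omega> q2 - x \<omega> q3 * y \<omega> q3\<bar>}" for e
  have Bsets: "B e \<in> sets M" for e
  proof -
    have inner: "{\<omega>\<in>space M. \<bar>q1 - q3\<bar> < 2 * e \<and> \<bar>q2 - q3\<bar> < 2 * e \<and>
        \<delta> / 2 < \<bar>x \<omega> q1 * y \<omega> q2 - x \<omega> q3 * y \<omega> q3\<bar>} \<in> sets M" for q1 q2 q3
    proof -
      have "(\<lambda>\<omega>. \<bar>x \<omega> q1 * y \<omega> q2 - x \<omega> q3 * y \<omega> q3\<bar>) \<in> borel_measurable M"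
        using mx my by measurable
      then show ?thesis by measurable
    qed
    show ?thesis unfolding B_def
      by (intro sets.sets_Collect_countable_Ex' countable_rat inner)
  qed
  have Bmono: "B e1 \<subseteq> B e2" if "e1 \<le> e2" for e1 e2
  proof -
    have l: "\<And>a::real. a < 2 * e1 \<Longrightarrow> a < 2 * e2" using that by linarith
    show ?thesis unfolding B_def using l by blast
  qed
  have Bempty: "\<exists>n. \<omega> \<notin> B (inverse (real (Suc n)))" if om: "\<omega> \<in> space M" for \<omega>
  proof -
    obtain Kx where Kx: "Kx \<ge> 0" "\<And>s. \<bar>x \<omega> s\<bar> \<le> Kx"
      using ext_bnd[of T X \<omega>, OF T0 cXo[OF om]] unfolding x_def by blast
    obtain Ky where Ky: "Ky \<ge> 0" "\<And>s. \<bar>y \<omega> s\<bar> \<le> Ky"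
      using ext_bnd[of T Y \<omega>, OF T0 cYo[OF om]] unfolding y_def by blast
    define e' where "e' = \<delta> / (4 * (Kx + Ky + 1))"
    have e': "e' > 0" unfolding e'_def using d Kx Ky by auto
    have e'b: "e' * Ky + Kx * e' < \<delta> / 2"
    proof -
      have K1: "e' * (Kx + Ky + 1) = \<delta> / 4" unfolding e'_def using Kx Ky by (simp add: field_simps)
      have "e' * Ky + Kx * e' = e' * (Kx + Ky + 1) - e'" by (simp add: algebra_simps)
      then show ?thesis using K1 e' d by linarith
    qed
    obtain dx where dx: "dx > 0" "\<And>s r. \<bar>s - r\<bar> < dx \<Longrightarrow> \<bar>x \<omega> s - x \<omega> r\<bar> < e'"
      using ext_uc[of T X \<omega> e', OF T0 cXo[OF om] e'] unfolding x_def by blast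
    obtain dy where dy: "dy > 0" "\<And>s r. \<bar>s - r\<bar> < dy \<Longrightarrow> \<bar>y \<omega> s - y \<omega> r\<bar> < e'"
      using ext_uc[of T Y \<omega> e', OF T0 cYo[OF om] e'] unfolding y_def by blast
    obtain n where n: "inverse (real (Suc n)) < min dx dy / 2"
      using reals_Archimedean[of "min dx dy / 2"] dx dy by auto
    have "\<omega> \<notin> B (inverse (real (Suc n)))"
    proof
      assume "\<omega> \<in> B (inverse (real (Suc n)))"
      then obtain q1 q2 q3 where q: "\<bar>q1 - q3\<bar> < 2 * inverse (real (Suc n))"
        "\<bar>q2 - q3\<bar> < 2 * inverse (real (Suc n))"
        "\<delta> / 2 < \<bar>x \<omega> q1 * y \<omega> q2 - x \<omega> q3 * y \<omega> q3\<bar>"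
        unfolding B_def by blast
      have a1: "\<bar>x \<omega> q1 - x \<omega> q3\<bar> < e'" using q(1) n by (intro dx(2)) auto
      have a2: "\<bar>y \<omega> q2 - y \<omega> q3\<bar> < e'" using q(2) n by (intro dy(2)) auto
      have "\<bar>x \<omega> q1 * y \<omega> q2 - x \<omega> q3 * y \<omega> q3\<bar>
          = \<bar>(x \<omega> q1 - x \<omega> q3) * y \<omega> q2 + x \<omega> q3 * (y \<omega> q2 - y \<omega> q3)\<bar>"
        by (simp add: algebra_simps)
      also have "\<dots> \<le> \<bar>x \<omega> q1 - x \<omega> q3\<bar> * \<bar>y \<omega> q2\<bar> + \<bar>x \<omega> q3\<bar> * \<bar>y \<omega> q2 - y \<omega> q3\<bar>"
        by (metis abs_mult abs_triangle_ineq)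
      also have "\<dots> \<le> e' * Ky + Kx * e'"
        using a1 a2 Kx Ky by (intro add_mono mult_mono) auto
      finally show False using e'b q(3) by linarith
    qed
    then show ?thesis by blast
  qed
  define Bn where "Bn n = B (inverse (real (Suc n)))" for n
  have "(\<lambda>n. measure M (Bn n)) \<longlonglongrightarrow> measure M (\<Inter>n. Bn n)"
  proof (rule finite_Lim_measure_decseq)
    show "range Bn \<subseteq> sets M" using Bsets unfolding Bn_def by auto
    show "decseq Bn" unfolding decseq_def Bn_def
      by (intro allI impI Bmono) (simp add: field_simps)
  qed
  moreover have "(\<Inter>n. Bn n) = {}"
  proof -
    have "Bn n \<subseteq> space M" for n unfolding Bn_def B_def by auto
    then show ?thesis using Bempty unfolding Bn_def by blast
  qed
  ultimately have "(\<lambda>n. measure M (Bn n)) \<longlonglongrightarrow> 0" by simp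
  then obtain N where N: "measure M (Bn N) < \<eta>"
    using h by (metis (no_types, lifting) eventually_sequentially order.refl order_tendstoD(2))
  show "\<exists>e0>0. \<forall>\<epsilon>. 0 < \<epsilon> \<and> \<epsilon> < e0 \<longrightarrow>
          (\<exists>A\<in>sets M. measure M A < \<eta> \<and>
             {\<omega> \<in> space M. \<exists>t\<in>{0..T}. \<delta> < \<bar>2 * sym_approx T X Y \<epsilon> t \<omega> - levy_approx T X Y \<epsilon> t \<omega>
                 - (X t \<omega> * Y t \<omega> - X 0 \<omega> * Y 0 \<omega>)\<bar>} \<subseteq> A)"
  proof (intro exI[of _ "inverse (real (Suc N))"] conjI allI impI bexI[of _ "Bn N"])
    show "0 < inverse (real (Suc N))" by simp
    show "Bn N \<in> sets M" unfolding Bn_def by (rule Bsets)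
    show "measure M (Bn N) < \<eta>" by (rule N)
    fix \<epsilon> assume eps: "0 < \<epsilon> \<and> \<epsilon> < inverse (real (Suc N))"
    show "{\<omega> \<in> space M. \<exists>t\<in>{0..T}. \<delta> < \<bar>2 * sym_approx T X Y \<epsilon> t \<omega> - levy_approx T X Y \<epsilon> t \<omega>
                 - (X t \<omega> * Y t \<omega> - X 0 \<omega> * Y 0 \<omega>)\<bar>} \<subseteq> Bn N"
    proof safe
      fix \<omega> t assume om: "\<omega> \<in> space M" and t: "t \<in> {0..T}"
        and big: "\<delta> < \<bar>2 * sym_approx T X Y \<epsilon> t \<omega> - levy_approx T X Y \<epsilon> t \<omega>
                 - (X t \<omega> * Y t \<omega> - X 0 \<omega> * Y 0 \<omega>)\<bar>"
      have xt: "x \<omega> t = X t \<omega>" "y \<omega> t = Y t \<omega>" "x \<omega> 0 = X 0 \<omega>" "y \<omega> 0 = Y 0 \<omega>"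
        unfolding x_def y_def using t T0 by (auto intro!: ext_in)
      have "\<exists>s u r. \<bar>s - r\<bar> \<le> \<epsilon> \<and> \<bar>u - r\<bar> \<le> \<epsilon> \<and> \<delta> / 2 < \<bar>x \<omega> s * y \<omega> u - x \<omega> r * y \<omega> r\<bar>"
      proof (rule ccontr)
        assume "\<not> ?thesis"
        then have bnd: "\<And>s u r. \<bar>s - r\<bar> \<le> \<epsilon> \<Longrightarrow> \<bar>u - r\<bar> \<le> \<epsilon> \<Longrightarrow> \<bar>x \<omega> s * y \<omega> u - x \<omega> r * y \<omega> r\<bar> \<le> \<delta> / 2"
          by (meson not_le)
        have "\<bar>2 * integral {0..t} (\<lambda>s. x \<omega> s * (y \<omega> (s + \<epsilon>) - y \<omega> (s - \<epsilon>)) / (2 * \<epsilon>))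
           - integral {0..t} (\<lambda>s. (x \<omega> s * y \<omega> (s + \<epsilon>) - x \<omega> (s + \<epsilon>) * y \<omega> s) / \<epsilon>)
           - (x \<omega> t * y \<omega> t - x \<omega> 0 * y \<omega> 0)\<bar> \<le> 2 * (\<delta> / 2)"
          by (rule det[OF cx[OF om] cy[OF om]]) (use eps t bnd in auto)
        then show False using big xt
          unfolding sym_approx_def levy_approx_def x_def y_def by simp
      qed
      then obtain s u r where sur: "\<bar>s - r\<bar> \<le> \<epsilon>" "\<bar>u - r\<bar> \<le> \<epsilon>"
        "\<delta> / 2 < \<bar>x \<omega> s * y \<omega> u - x \<omega> r * y \<omega> r\<bar>" by blast
      have e2: "\<epsilon> / 2 > 0" using eps by simp
      have cxo: "continuous_on UNIV (\<lambda>z. x \<omega> z)" using cx[OF om] by simp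
      have cyo: "continuous_on UNIV (\<lambda>z. y \<omega> z)" using cy[OF om] by simp
      have h1: "continuous_on UNIV (\<lambda>z. \<bar>x \<omega> z * y \<omega> u - x \<omega> r * y \<omega> r\<bar>)"
        by (intro continuous_intros cxo)
      obtain q1 where q1: "q1 \<in> \<rat>" "\<bar>q1 - s\<bar> < \<epsilon> / 2" "\<delta> / 2 < \<bar>x \<omega> q1 * y \<omega> u - x \<omega> r * y \<omega> r\<bar>"
        using rat_approx[OF h1 sur(3) e2] by blast
      have h2: "continuous_on UNIV (\<lambda>z. \<bar>x \<omega> q1 * y \<omega> z - x \<omega> r * y \<omega> r\<bar>)"
        by (intro continuous_intros cyo)
      obtain q2 where q2: "q2 \<in> \<rat>" "\<bar>q2 - u\<bar> < \<epsilon> / 2" "\<delta> / 2 < \<bar>x \<omega> q1 * y \<omega> q2 - x \<omega> r * y \<omega> r\<bar>"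
        using rat_approx[OF h2 q1(3) e2] by blast
      have h3: "continuous_on UNIV (\<lambda>z. \<bar>x \<omega> q1 * y \<omega> q2 - x \<omega> z * y \<omega> z\<bar>)"
        by (intro continuous_intros cxo cyo)
      obtain q3 where q3: "q3 \<in> \<rat>" "\<bar>q3 - r\<bar> < \<epsilon> / 2" "\<delta> / 2 < \<bar>x \<omega> q1 * y \<omega> q2 - x \<omega> q3 * y \<omega> q3\<bar>"
        using rat_approx[OF h3 q2(3) e2] by blast
      have d13: "\<bar>q1 - q3\<bar> < 2 * \<epsilon>" using q1(2) q3(2) sur(1) by linarith
      have d23: "\<bar>q2 - q3\<bar> < 2 * \<epsilon>" using q2(2) q3(2) sur(2) by linarith
      have "\<omega> \<in> B \<epsilon>" unfolding B_def
        using om q1(1) q2(1) q3(1) q3(3) d13 d23 by blast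
      moreover have "B \<epsilon> \<subseteq> Bn N" unfolding Bn_def using eps by (intro Bmono) simp
      ultimately show "\<omega> \<in> Bn N" by blast
    qed
  qed
qed

theorem proposition4p8:
  fixes M :: "'a measure" and T :: real and X Y :: "real \<Rightarrow> 'a \<Rightarrow> real"
  assumes "prob_space M" and "T > 0"
    and "continuous_process M T X" and "continuous_process M T Y"
  shows "((\<exists>I. is_sym_integral M T X Y I) \<longleftrightarrow> (\<exists>L. is_levy_area M T X Y L))
    \<and> (\<forall>I L. is_sym_integral M T X Y I \<and> is_levy_area M T X Y L \<longrightarrow>
         (AE \<omega> in M. \<forall>t\<in>{0..T}.
            2 * I t \<omega> = X t \<omega> * Y t \<omega> - X 0 \<omega> * Y 0 \<omega> + L t \<omega>))"
proof -
  let ?S = "sym_approx T X Y" and ?L = "levy_approx T X Y"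
  let ?d = "\<lambda>t \<omega>. X t \<omega> * Y t \<omega> - X 0 \<omega> * Y 0 \<omega>"
  have D: "ucp_conv M T (\<lambda>e t \<omega>. 2 * ?S e t \<omega> - ?L e t \<omega>) ?d"
    by (rule D_conv[OF assms])
  have part1: "(\<exists>I. is_sym_integral M T X Y I) \<longleftrightarrow> (\<exists>L. is_levy_area M T X Y L)"
  proof
    assume "\<exists>I. is_sym_integral M T X Y I"
    then obtain I where I: "ucp_conv M T ?S I" unfolding is_sym_integral_def by blast
    have "ucp_conv M T (\<lambda>e t \<omega>. 2 * ?S e t \<omega> + (-1) * (2 * ?S e t \<omega> - ?L e t \<omega>))
        (\<lambda>t \<omega>. 2 * I t \<omega> + (-1) * ?d t \<omega>)"
      by (rule ucp_lin[OF I D])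
    moreover have "(\<lambda>e t \<omega>. 2 * ?S e t \<omega> + (-1) * (2 * ?S e t \<omega> - ?L e t \<omega>)) = ?L"
      by (intro ext) simp
    ultimately show "\<exists>L. is_levy_area M T X Y L" unfolding is_levy_area_def by auto
  next
    assume "\<exists>L. is_levy_area M T X Y L"
    then obtain L where L: "ucp_conv M T ?L L" unfolding is_levy_area_def by blast
    have "ucp_conv M T (\<lambda>e t \<omega>. (1/2) * ?L e t \<omega> + (1/2) * (2 * ?S e t \<omega> - ?L e t \<omega>))
        (\<lambda>t \<omega>. (1/2) * L t \<omega> + (1/2) * ?d t \<omega>)"
      by (rule ucp_lin[OF L D])
    moreover have "(\<lambda>e t \<omega>. (1/2) * ?L e t \<omega> + (1/2) * (2 * ?S e t \<omega> - ?L e t \<omega>)) = ?S"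
      by (intro ext) (simp add: field_simps)
    ultimately show "\<exists>I. is_sym_integral M T X Y I" unfolding is_sym_integral_def by auto
  qed
  have part2: "AE \<omega> in M. \<forall>t\<in>{0..T}. 2 * I t \<omega> = X t \<omega> * Y t \<omega> - X 0 \<omega> * Y 0 \<omega> + L t \<omega>"
    if "is_sym_integral M T X Y I \<and> is_levy_area M T X Y L" for I L
  proof -
    have I: "ucp_conv M T ?S I" and L: "ucp_conv M T ?L L"
      using that unfolding is_sym_integral_def is_levy_area_def by auto
    have "ucp_conv M T (\<lambda>e t \<omega>. 2 * ?S e t \<omega> + (-1) * ?L e t \<omega>) (\<lambda>t \<omega>. 2 * I t \<omega> + (-1) * L t \<omega>)"
      by (rule ucp_lin[OF I L])
    from ucp_lin[OF this D, of 1 "-1"]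
    have "ucp_conv M T (\<lambda>e t \<omega>. 0) (\<lambda>t \<omega>. 1 * (2 * I t \<omega> + (-1) * L t \<omega>) + (-1) * ?d t \<omega>)"
      by simp
    from ucp_zero_AE[OF assms(1) this]
    show ?thesis by (rule eventually_mono) (auto simp: algebra_simps)
  qed
  show ?thesis using part1 part2 by blast
qed

end
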